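(* Let $(M,g,S)$, $p$, $u$, $\varphi$, $\beta_2$ and $e_1,e_2$ be as in the context. Give each $v\in\beta_2$ coordinates $(x,y)$ by $v=xe_1+ye_2$. For $a\in\mathbb R$, the circle $k_2=\{v\in\beta_2:\tilde g(v,v)=a\}$ has the equation $$\frac{2\cos\varphi+1}{1+\cos\varphi}\,x^2+\frac{2\cos\varphi-1}{1-\cos\varphi}\,y^2=a.$$
   Context: $M$ is a 4-dimensional differentiable manifold with a positive definite metric $g$ and a tensor field $S$ of type $(1,1)$ whose components in some local coordinate system form the matrix with rows $(0,1,0,0)$, $(0,0,1,0)$, $(0,0,0,1)$, $(-1,0,0,0)$; hence $S^4=-\mathrm{id}$, and $g(Su,Sv)=g(u,v)$ for all vector fields $u,v$. The associated metric is $\tilde g(u,v)=g(u,Sv)+g(Su,v)$. Here $p\in M$, $u\in T_pM$ is a $g$-unit vector such that $\{u,Su,S^2u,S^3u\}$ is a basis of $T_pM$, $\varphi=\angle(u,Su)$ with respect to $g$ (so $\cos\varphi=g(u,Su)$; known: $\frac{\pi}{4}<\varphi<\frac{3\pi}{4}$), $\beta_2=\mathrm{span}\{u,Su\}$, and $e_1=\frac{1}{\sqrt{2(1+\cos\varphi)}}(u+Su)$, $e_2=\frac{1}{\sqrt{2(1-\cos\varphi)}}(-u+Su)$ (a $g$-orthonormal basis of $\beta_2$). *)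

theory Defs
  imports "HOL-Analysis.Analysis"
begin

text \<open>Pointwise model: T_pM is identified with real^4 via the local coordinate
  system; the indices 1,2,3,4 of type 4 are the four coordinates.\<close>

definition Smat :: "real^4^4" where
  "Smat = (\<chi> i j. if (i = 1 \<and> j = 2) \<or> (i = 2 \<and> j = 3) \<or> (i = 3 \<and> j = 4) then 1
                  else if i = 4 \<and> j = 1 then -1 else 0)"

definition Sop :: "real^4 \<Rightarrow> real^4" where
  "Sop x = Smat *v x"

definition gmet :: "real^4^4 \<Rightarrow> real^4 \<Rightarrow> real^4 \<Rightarrow> real" where
  "gmet G x y = x \<bullet> (G *v y)"

definition gtil :: "real^4^4 \<Rightarrow> real^4 \<Rightarrow> real^4 \<Rightarrow> real" where
  "gtil G x y = gmet G x (Sop y) + gmet G (Sop x) y"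

end

theory Submission
  imports Defs
begin

lemma span2: "(v::real^4) \<in> span {p, q} \<longleftrightarrow> (\<exists>a b. v = a *\<^sub>R p + b *\<^sub>R q)"
proof
  assume "v \<in> span {p, q}"
  then show "\<exists>a b. v = a *\<^sub>R p + b *\<^sub>R q"
    by (auto simp: span_insert span_singleton) (metis add_diff_cancel_left' eq_diff_eq)
next
  assume "\<exists>a b. v = a *\<^sub>R p + b *\<^sub>R q"
  then obtain a b where "v = a *\<^sub>R p + b *\<^sub>R q" by blast
  then show "v \<in> span {p, q}"
    by (simp add: span_add span_base span_scale)
qed

lemma S4: "Sop (Sop (Sop (Sop x))) = - x"
  by (simp add: Sop_def Smat_def matrix_vector_mult_def vec_eq_iff forall_4 sum_4)

lemma Sop_add: "Sop (x + y) = Sop x + Sop y" by (simp add: Sop_def matrix_vector_right_distrib)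
lemma Sop_scale: "Sop (c *\<^sub>R x) = c *\<^sub>R Sop x" by (simp add: Sop_def matrix_vector_mult_scaleR)
lemma Sop_neg: "Sop (- x) = - Sop x" using Sop_scale[of "-1" x] by simp

lemma g_sym: "transpose G = G \<Longrightarrow> gmet G x y = gmet G y x"
  unfolding gmet_def by (metis dot_lmul_matrix inner_commute vector_transpose_matrix)
lemma g_add1: "gmet G (x + y) z = gmet G x z + gmet G y z" by (simp add: gmet_def inner_add_left)
lemma g_add2: "gmet G z (x + y) = gmet G z x + gmet G z y" by (simp add: gmet_def inner_add_right matrix_vector_right_distrib)
lemma g_sc1: "gmet G (c *\<^sub>R x) z = c * gmet G x z" by (simp add: gmet_def)
lemma g_sc2: "gmet G z (c *\<^sub>R x) = c * gmet G z x" by (simp add: gmet_def matrix_vector_mult_scaleR)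
lemma g_neg1: "gmet G (- x) z = - gmet G x z" by (simp add: gmet_def)
lemma g_neg2: "gmet G z (- x) = - gmet G z x" using g_sc2[of G z "-1" x] by simp

theorem theorem5p6:
  fixes G :: "real^4^4" and u :: "real^4" and \<phi> a :: real
  assumes G_sym: "transpose G = G"
    and G_pos: "\<And>x. x \<noteq> 0 \<Longrightarrow> gmet G x x > 0"
    and S_isom: "\<And>x y. gmet G (Sop x) (Sop y) = gmet G x y"
    and u_unit: "gmet G u u = 1"
    and u_indep: "independent {u, Sop u, Sop (Sop u), Sop (Sop (Sop u))}"
    and u_span: "span {u, Sop u, Sop (Sop u), Sop (Sop (Sop u))} = UNIV"
    and phi_cos: "cos \<phi> = gmet G u (Sop u)"
    and phi_range: "pi / 4 < \<phi>" "\<phi> < 3 * pi / 4"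
  defines "e1 \<equiv> (1 / sqrt (2 * (1 + cos \<phi>))) *\<^sub>R (u + Sop u)"
    and "e2 \<equiv> (1 / sqrt (2 * (1 - cos \<phi>))) *\<^sub>R (- u + Sop u)"
  shows "{v \<in> span {u, Sop u}. gtil G v v = a} =
         {x *\<^sub>R e1 + y *\<^sub>R e2 | x y.
            (2 * cos \<phi> + 1) / (1 + cos \<phi>) * x\<^sup>2
          + (2 * cos \<phi> - 1) / (1 - cos \<phi>) * y\<^sup>2 = a}"
proof -
  define c where "c = cos \<phi>"
  have "sin \<phi> > 0" using phi_range by (intro sin_gt_zero) (auto simp: field_simps)
  have "c\<^sup>2 = 1 - (sin \<phi>)\<^sup>2" unfolding c_def by (simp add: cos_squared_eq)
  moreover have "(sin \<phi>)\<^sup>2 > 0" using \<open>sin \<phi> > 0\<close> by simp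
  ultimately have "c\<^sup>2 < 1" by linarith
  then have "\<bar>c\<bar> < 1" by (simp add: abs_square_less_1)
  then have cb: "-1 < c" "c < 1" by auto
  have g0: "gmet G u (Sop (Sop u)) = 0"
  proof -
    have "gmet G u (Sop (Sop u)) = gmet G (Sop (Sop u)) (Sop (Sop (Sop (Sop u))))"
      by (simp add: S_isom)
    also have "\<dots> = - gmet G u (Sop (Sop u))"
      by (simp add: S4 g_neg2 g_sym[OF G_sym])
    finally show ?thesis by simp
  qed
  have g1: "gmet G (Sop u) (Sop u) = 1" using S_isom u_unit by simp
  have g2: "gmet G (Sop u) (Sop (Sop u)) = c" using S_isom phi_cos c_def by simp
  have gc: "gmet G u (Sop u) = c" using phi_cos c_def by simp
  have key: "gtil G (al *\<^sub>R u + be *\<^sub>R Sop u) (al *\<^sub>R u + be *\<^sub>R Sop u)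
        = 2 * (c * (al\<^sup>2 + be\<^sup>2) + al * be)" for al be
    unfolding gtil_def
    by (simp add: Sop_add Sop_scale g_add1 g_add2 g_sc1 g_sc2 g0 g1 g2 gc
        g_sym[OF G_sym, of "Sop u" u] g_sym[OF G_sym, of "Sop (Sop u)" u]
        g_sym[OF G_sym, of "Sop (Sop u)" "Sop u"] power2_eq_square algebra_simps)
  define A where "A = sqrt (2 * (1 + c))"
  define B where "B = sqrt (2 * (1 - c))"
  have A2: "A\<^sup>2 = 2 * (1 + c)" and B2: "B\<^sup>2 = 2 * (1 - c)" using cb unfolding A_def B_def by simp_all
  have Apos: "A > 0" and Bpos: "B > 0" using cb unfolding A_def B_def by simp_all
  have e12: "x *\<^sub>R e1 + y *\<^sub>R e2 = (x / A - y / B) *\<^sub>R u + (x / A + y / B) *\<^sub>R Sop u" for x y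
    unfolding e1_def e2_def A_def[symmetric] B_def[symmetric] c_def[symmetric]
    by (simp add: algebra_simps scaleR_add_right diff_divide_distrib add_divide_distrib)
  have form: "gtil G (x *\<^sub>R e1 + y *\<^sub>R e2) (x *\<^sub>R e1 + y *\<^sub>R e2) =
       (2 * c + 1) / (1 + c) * x\<^sup>2 + (2 * c - 1) / (1 - c) * y\<^sup>2" for x y
  proof -
    define p where "p = x / A"
    define q where "q = y / B"
    have x: "x\<^sup>2 = 2 * (1 + c) * p\<^sup>2" using Apos A2 cb unfolding p_def by (simp add: power_divide)
    have y: "y\<^sup>2 = 2 * (1 - c) * q\<^sup>2" using Bpos B2 cb unfolding q_def by (simp add: power_divide)
    have "gtil G (x *\<^sub>R e1 + y *\<^sub>R e2) (x *\<^sub>R e1 + y *\<^sub>R e2) = 2 * (c * ((p - q)\<^sup>2 + (p + q)\<^sup>2) + (p - q) * (p + q))"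
      unfolding e12 key p_def q_def by simp
    also have "\<dots> = (2 * c + 1) / (1 + c) * x\<^sup>2 + (2 * c - 1) / (1 - c) * y\<^sup>2"
    proof -
      have h1: "(2 * c + 1) / (1 + c) * (2 * (1 + c) * p\<^sup>2) = 2 * (2 * c + 1) * p\<^sup>2"
        using cb by (simp add: field_simps)
      have h2: "(2 * c - 1) / (1 - c) * (2 * (1 - c) * q\<^sup>2) = 2 * (2 * c - 1) * q\<^sup>2"
        using cb by (simp add: field_simps)
      show ?thesis unfolding x y h1 h2 by (simp add: power2_eq_square algebra_simps)
    qed
    finally show ?thesis .
  qed
  show ?thesis
  proof (rule set_eqI, rule iffI)
    fix v assume "v \<in> {v \<in> span {u, Sop u}. gtil G v v = a}"
    then obtain al be where v: "v = al *\<^sub>R u + be *\<^sub>R Sop u" and va: "gtil G v v = a"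
      by (auto simp: span2)
    define x where "x = A * (al + be) / 2"
    define y where "y = B * (be - al) / 2"
    have "v = x *\<^sub>R e1 + y *\<^sub>R e2"
      unfolding e12 v x_def y_def using Apos Bpos by (simp add: field_simps)
    then show "v \<in> {x *\<^sub>R e1 + y *\<^sub>R e2 | x y.
            (2 * cos \<phi> + 1) / (1 + cos \<phi>) * x\<^sup>2
          + (2 * cos \<phi> - 1) / (1 - cos \<phi>) * y\<^sup>2 = a}"
      using form va c_def by fastforce
  next
    fix v assume "v \<in> {x *\<^sub>R e1 + y *\<^sub>R e2 | x y.
            (2 * cos \<phi> + 1) / (1 + cos \<phi>) * x\<^sup>2
          + (2 * cos \<phi> - 1) / (1 - cos \<phi>) * y\<^sup>2 = a}"
    then obtain x y where v: "v = x *\<^sub>R e1 + y *\<^sub>R e2" and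
      f: "(2 * c + 1) / (1 + c) * x\<^sup>2 + (2 * c - 1) / (1 - c) * y\<^sup>2 = a"
      unfolding c_def by blast
    have "v \<in> span {u, Sop u}" unfolding v e12 span2 by blast
    then show "v \<in> {v \<in> span {u, Sop u}. gtil G v v = a}" using form f v by simp
  qed
qed

end
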